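(* Let $d\ge2$, $\varepsilon\in(0,1)$, $c\in\{1,2,\dots\}\cup\{\infty\}$, and let $W$ be the gap process of the $d$-ball SBBS. Let $\gamma=\min\{t\in\mathbb Z_{\ge0}: W^i_t\ge1\text{ for all }1\le i\le d-1\}$. Then for every $x\in\mathbb Z^{d-1}_{\ge0}$, $\mathbb E[\gamma\mid W_0=x]<\infty$.
   Context: Stochastic box-ball system (SBBS). Fix an error probability $\varepsilon\in[0,1]$ and a capacity $c\in\{1,2,\dots\}\cup\{\infty\}$. A configuration is $\zeta\in\{0,1\}^{\mathbb N}$, $\mathbb N=\{1,2,\dots\}$, with finitely many $1$'s (balls). Given $\zeta$, the stochastic carrier process $\Gamma$ is defined by $\Gamma(0)=0$ and recursively (with fresh independent randomness at each $k$): $\Gamma(k)=\Gamma(k-1)+1$ with probability $1-\varepsilon$ (and $\Gamma(k)=\Gamma(k-1)$ otherwise) if $\zeta(k)=1$ and $\Gamma(k-1)<c$; $\Gamma(k)=\Gamma(k-1)-1$ if $\zeta(k)=0$ and $\Gamma(k-1)\ge1$; $\Gamma(k)=\Gamma(k-1)$ otherwise. The new configuration is $\zeta'(k)=\mathbf 1(\Gamma(k)-\Gamma(k-1)=-1)+\mathbf 1(\Gamma(k)=\Gamma(k-1),\ \zeta(k)=1)$. Iterating independently gives the SBBS trajectory $(\zeta_t)_{t\in\mathbb Z_{\ge0}}$. The number $d$ of balls is conserved; $\zeta^{(1)}_t<\dots<\zeta^{(d)}_t$ denote the ball positions. The gap process is $W_t=(W^1_t,\dots,W^{d-1}_t)$,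 $W^i_t=\zeta^{(i+1)}_t-\zeta^{(i)}_t-1$; it is a time-homogeneous Markov chain on $\mathbb Z^{d-1}_{\ge0}$ whose law depends only on $W_0$. *)

theory Defs
  imports "HOL-Probability.Probability"
begin

text \<open>A configuration is the (finite) set of occupied sites in {1,2,...}.
  The randomness of the SBBS is realised by an i.i.d. field of coins
  omega (t,k), t = time, k = site; coin True (probability 1 - eps) means that
  the carrier picks up the ball at site k at time step t (when it is allowed to).\<close>

fun carrier :: "enat \<Rightarrow> nat set \<Rightarrow> (nat \<Rightarrow> bool) \<Rightarrow> nat \<Rightarrow> nat" where
  "carrier c \<zeta> b 0 = 0"
| "carrier c \<zeta> b (Suc k) =
     (let g = carrier c \<zeta> b k in
      if Suc k \<in> \<zeta> \<and> enat g < c then (if b (Suc k) then g + 1 else g)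
      else if Suc k \<notin> \<zeta> \<and> g \<ge> 1 then g - 1
      else g)"

definition sbbs_step :: "enat \<Rightarrow> nat set \<Rightarrow> (nat \<Rightarrow> bool) \<Rightarrow> nat set" where
  "sbbs_step c \<zeta> b =
     {k. k \<ge> 1 \<and>
        (carrier c \<zeta> b k + 1 = carrier c \<zeta> b (k - 1) \<or>
         (carrier c \<zeta> b k = carrier c \<zeta> b (k - 1) \<and> k \<in> \<zeta>))}"

fun sbbs_traj :: "enat \<Rightarrow> nat set \<Rightarrow> (nat \<times> nat \<Rightarrow> bool) \<Rightarrow> nat \<Rightarrow> nat set" where
  "sbbs_traj c \<zeta>0 \<omega> 0 = \<zeta>0"
| "sbbs_traj c \<zeta>0 \<omega> (Suc t) = sbbs_step c (sbbs_traj c \<zeta>0 \<omega> t) (\<lambda>k. \<omega> (t, k))"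

definition coin_space :: "real \<Rightarrow> (nat \<times> nat \<Rightarrow> bool) measure" where
  "coin_space \<epsilon> = PiM UNIV (\<lambda>_. measure_pmf (bernoulli_pmf (1 - \<epsilon>)))"

definition ball_positions :: "nat set \<Rightarrow> nat list" where
  "ball_positions \<zeta> = sorted_list_of_set \<zeta>"

definition gaps :: "nat set \<Rightarrow> nat list" where
  "gaps \<zeta> = (let p = ball_positions \<zeta> in
              map (\<lambda>i. p ! (i + 1) - p ! i - 1) [0..<length p - 1])"

definition all_gaps_pos :: "nat set \<Rightarrow> bool" where
  "all_gaps_pos \<zeta> \<longleftrightarrow> (\<forall>i < length (gaps \<zeta>). gaps \<zeta> ! i \<ge> 1)"

definition gamma_time :: "enat \<Rightarrow> nat set \<Rightarrow> (nat \<times> nat \<Rightarrow> bool) \<Rightarrow> ennreal" where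
  "gamma_time c \<zeta>0 \<omega> =
     (if \<exists>t. all_gaps_pos (sbbs_traj c \<zeta>0 \<omega> t)
      then of_nat (LEAST t. all_gaps_pos (sbbs_traj c \<zeta>0 \<omega> t)) else \<infinity>)"

end

theory Submission
  imports Defs
begin


lemma carrier_cong:
  assumes "\<forall>j\<in>\<zeta>. b j = b' j"
  shows "carrier c \<zeta> b k = carrier c \<zeta> b' k"
  by (induction k) (use assms in \<open>auto simp: Let_def\<close>)

lemma sbbs_step_cong:
  assumes "\<forall>j\<in>\<zeta>. b j = b' j"
  shows "sbbs_step c \<zeta> b = sbbs_step c \<zeta> b'"
  unfolding sbbs_step_def using carrier_cong[OF assms] by simp

lemma carrier_move:
  assumes "a \<in> Z" "Suc a \<notin> Z" "c \<ge> 1" "\<forall>k\<in>Z. b k = (k = a)" "0 \<notin> Z"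
  shows "carrier c Z b k = (if k = a then 1 else 0)"
proof (induction k)
  case 0
  then show ?case using assms by (cases a) auto
next
  case (Suc k)
  have "(0::enat) < 1" by simp
  then have c0: "enat 0 < c" using assms(3) zero_enat_def by (metis order_less_le_trans)
  show ?case
  proof (cases "k = a")
    case True
    then show ?thesis using Suc assms by (auto simp: Let_def)
  next
    case False
    then show ?thesis using Suc assms c0 by (auto simp: Let_def)
  qed
qed

definition mv :: "nat set \<Rightarrow> nat \<Rightarrow> nat set" where
  "mv Z a = insert (Suc a) (Z - {a})"

lemma step_move:
  assumes "a \<in> Z" "Suc a \<notin> Z" "c \<ge> 1" "\<forall>k\<in>Z. b k = (k = a)" "0 \<notin> Z"
  shows "sbbs_step c Z b = mv Z a"
proof -
  have C: "\<And>k. carrier c Z b k = (if k = a then 1 else 0)"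
    using carrier_move[OF assms(1-5)] by blast
  have a1: "a \<ge> 1" using assms(1,5) by (cases a) auto
  show ?thesis
  proof (rule set_eqI)
    fix k
    show "k \<in> sbbs_step c Z b \<longleftrightarrow> k \<in> mv Z a"
    proof (cases "k = a")
      case True then show ?thesis using a1 assms(1,2) unfolding sbbs_step_def mv_def C by auto
    next
      case F1: False
      show ?thesis
      proof (cases "k = Suc a")
        case True then show ?thesis using a1 assms(1,2) unfolding sbbs_step_def mv_def C by auto
      next
        case False
        then have "k - 1 \<noteq> a \<or> k = 0" by auto
        then show ?thesis using F1 False assms(5) unfolding sbbs_step_def mv_def C
          by (cases k) auto
      qed
    qed
  qed
qed

lemma carrier_inv:
  "card (sbbs_step c \<zeta> b \<inter> {1..K}) + carrier c \<zeta> b K = card (\<zeta> \<inter> {1..K})"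
proof (induction K)
  case 0
  then show ?case by simp
next
  case (Suc K)
  let ?S = "sbbs_step c \<zeta> b"
  have split: "\<And>A. A \<inter> {1..Suc K} = (if Suc K \<in> A then insert (Suc K) (A \<inter> {1..K}) else A \<inter> {1..K})"
    by (auto simp: le_Suc_eq)
  have mem: "Suc K \<in> ?S \<longleftrightarrow> (carrier c \<zeta> b (Suc K) + 1 = carrier c \<zeta> b K \<or>
         (carrier c \<zeta> b (Suc K) = carrier c \<zeta> b K \<and> Suc K \<in> \<zeta>))"
    unfolding sbbs_step_def by simp
  show ?case
    using Suc mem
    by (subst (1 2) split) (auto simp: Let_def card_insert_if split: if_splits)
qed

lemma carrier_le: "carrier c \<zeta> b K \<le> card (\<zeta> \<inter> {1..K})"
  using carrier_inv[of c \<zeta> b K] by linarith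

lemma carrier_after:
  assumes "\<forall>x\<in>\<zeta>. x \<le> N"
  shows "carrier c \<zeta> b (N + j) = carrier c \<zeta> b N - j"
proof (induction j)
  case 0 then show ?case by simp
next
  case (Suc j)
  have "Suc (N + j) \<notin> \<zeta>" using assms by fastforce
  then show ?case using Suc by (auto simp: Let_def)
qed

lemma step_conserve:
  assumes "finite \<zeta>" "0 \<notin> \<zeta>"
  shows "finite (sbbs_step c \<zeta> b) \<and> card (sbbs_step c \<zeta> b) = card \<zeta> \<and> 0 \<notin> sbbs_step c \<zeta> b"
proof -
  obtain N where N: "\<forall>x\<in>\<zeta>. x \<le> N" using assms finite_nat_set_iff_bounded_le by blast
  let ?K = "N + card \<zeta>"
  have cK: "carrier c \<zeta> b N \<le> card \<zeta>"
    using carrier_le[of c \<zeta> b N] assms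
    by (meson card_mono inf_le1 le_trans)
  have z: "\<And>j. j \<ge> card \<zeta> \<Longrightarrow> carrier c \<zeta> b (N + j) = 0"
    using carrier_after[OF N] cK by simp
  have sub: "sbbs_step c \<zeta> b \<subseteq> {1..?K}"
  proof
    fix k assume k: "k \<in> sbbs_step c \<zeta> b"
    have k1: "k \<ge> 1" using k unfolding sbbs_step_def by auto
    show "k \<in> {1..?K}"
    proof (rule ccontr)
      assume "k \<notin> {1..?K}"
      then have "k > ?K" using k1 by auto
      then have "k \<notin> \<zeta>" "carrier c \<zeta> b k = 0" "carrier c \<zeta> b (k - 1) = 0"
        using N z[of "k - N"] z[of "k - 1 - N"] by auto
      then show False using k unfolding sbbs_step_def by auto
    qed
  qed
  have "card (sbbs_step c \<zeta> b \<inter> {1..?K}) = card (\<zeta> \<inter> {1..?K})"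
    using carrier_inv[of c \<zeta> b ?K] z[of "card \<zeta>"] by simp
  moreover have "sbbs_step c \<zeta> b \<inter> {1..?K} = sbbs_step c \<zeta> b" using sub by auto
  moreover have "\<zeta> \<inter> {1..?K} = \<zeta>"
  proof (intro equalityI subsetI)
    fix x assume "x \<in> \<zeta>"
    then have "x \<noteq> 0" using assms(2) by metis
    have "x \<le> N" using N \<open>x \<in> \<zeta>\<close> by blast
    then show "x \<in> \<zeta> \<inter> {1..?K}" using \<open>x \<in> \<zeta>\<close> \<open>x \<noteq> 0\<close> by auto
  qed auto
  moreover have "0 \<notin> sbbs_step c \<zeta> b" unfolding sbbs_step_def by auto
  ultimately show ?thesis using sub finite_subset[OF sub] by auto
qed



fun vmoves :: "nat set \<Rightarrow> nat list \<Rightarrow> bool" where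
  "vmoves Z [] = True"
| "vmoves Z (a # as) = (a \<in> Z \<and> Suc a \<notin> Z \<and> vmoves (mv Z a) as)"

fun mvs :: "nat set \<Rightarrow> nat list \<Rightarrow> nat set" where
  "mvs Z [] = Z"
| "mvs Z (a # as) = mvs (mv Z a) as"

definition nice :: "nat set \<Rightarrow> bool" where
  "nice Z \<longleftrightarrow> (\<forall>x\<in>Z. Suc x \<notin> Z)"

lemma vmoves_append: "vmoves Z (xs @ ys) = (vmoves Z xs \<and> vmoves (mvs Z xs) ys)"
  by (induction xs arbitrary: Z) auto

lemma mvs_append: "mvs Z (xs @ ys) = mvs (mvs Z xs) ys"
  by (induction xs arbitrary: Z) auto

lemma mv_props:
  assumes "a \<in> Z" "Suc a \<notin> Z" "finite Z"
  shows "finite (mv Z a) \<and> card (mv Z a) = card Z \<and> (0 \<notin> Z \<longrightarrow> 0 \<notin> mv Z a)"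
  using assms card_gt_0_iff[of Z] unfolding mv_def by (auto simp: card_Diff_singleton)

lemma mvs_props:
  assumes "vmoves Z as" "finite Z" "0 \<notin> Z"
  shows "finite (mvs Z as) \<and> card (mvs Z as) = card Z \<and> 0 \<notin> mvs Z as"
  using assms
proof (induction as arbitrary: Z)
  case Nil then show ?case by simp
next
  case (Cons a as)
  then show ?case using mv_props[of a Z] by auto
qed

lemma mvs_back:
  assumes "vmoves Z as" "\<forall>x\<in>mvs Z as. x \<le> N"
  shows "\<forall>x\<in>Z. x \<le> N"
  using assms
proof (induction as arbitrary: Z)
  case Nil then show ?case by simp
next
  case (Cons a as)
  then have h: "\<forall>x\<in>mv Z a. x \<le> N" by auto
  show ?case
  proof
    fix x assume "x \<in> Z"
    show "x \<le> N"
    proof (cases "x = a")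
      case True
      then show ?thesis using h unfolding mv_def by auto
    next
      case False
      then show ?thesis using h \<open>x \<in> Z\<close> unfolding mv_def by auto
    qed
  qed
qed

lemma mvs_lift:
  assumes "vmoves Z as" "\<forall>x\<in>mvs Z as. Suc x < m"
  shows "vmoves (insert m Z) as \<and> mvs (insert m Z) as = insert m (mvs Z as)"
  using assms
proof (induction as arbitrary: Z)
  case Nil then show ?case by simp
next
  case (Cons a as)
  have v: "a \<in> Z" "Suc a \<notin> Z" "vmoves (mv Z a) as" using Cons.prems by auto
  have fin: "\<forall>x\<in>mvs (mv Z a) as. Suc x < m" using Cons.prems by auto
  have "\<forall>x\<in>mv Z a. x \<le> m - 2"
    using mvs_back[OF v(3), of "m - 2"] fin by fastforce
  then have "Suc (Suc a) \<le> m" unfolding mv_def by auto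
  then have eq: "mv (insert m Z) a = insert m (mv Z a)" unfolding mv_def by auto
  have IH: "vmoves (insert m (mv Z a)) as \<and> mvs (insert m (mv Z a)) as = insert m (mvs (mv Z a) as)"
    using Cons.IH[OF v(3) fin] .
  show ?case using IH eq v \<open>Suc (Suc a) \<le> m\<close> by auto
qed

lemma top_moves:
  assumes "\<forall>x\<in>Z. x < M"
  shows "vmoves (insert M Z) (map (\<lambda>j. M + j) [0..<k]) \<and>
         mvs (insert M Z) (map (\<lambda>j. M + j) [0..<k]) = insert (M + k) Z"
proof (induction k)
  case 0 then show ?case by simp
next
  case (Suc k)
  have "M + k \<notin> Z" "Suc (M + k) \<notin> Z" using assms by auto
  then have "mv (insert (M + k) Z) (M + k) = insert (M + Suc k) Z" unfolding mv_def by auto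
  then show ?case using Suc \<open>Suc (M + k) \<notin> Z\<close>
    by (simp add: vmoves_append mvs_append)
qed

lemma exist_moves:
  assumes "finite Z" "0 \<notin> Z" "\<forall>y\<in>Z. y \<le> N"
  shows "\<exists>as. vmoves Z as \<and> length as \<le> card Z * card Z \<and> nice (mvs Z as) \<and>
              (\<forall>x\<in>mvs Z as. x \<le> N + card Z)"
  using assms
proof (induction "card Z" arbitrary: Z N)
  case 0
  then have "Z = {}" by auto
  then show ?case by (intro exI[of _ "[]"]) (auto simp: nice_def)
next
  case (Suc n)
  let ?M = "Max Z"
  let ?Z' = "Z - {?M}"
  have ne: "Z \<noteq> {}" using Suc.hyps(2) by auto
  have MZ: "?M \<in> Z" using Max_in[OF Suc.prems(1) ne] .
  have M1: "?M \<ge> 1" using MZ Suc.prems(2) by (cases "?M") auto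
  have MN: "?M \<le> N" using MZ Suc.prems(3) by auto
  have cZ': "n = card ?Z'" using Suc.hyps(2) MZ Suc.prems(1) by simp
  have lt: "\<forall>x\<in>?Z'. x < ?M" using Suc.prems(1) by (auto simp: order.not_eq_order_implies_strict)
  have bZ': "\<forall>y\<in>?Z'. y \<le> ?M - 1"
  proof
    fix y assume "y \<in> ?Z'"
    then have "y < ?M" using lt by blast
    then show "y \<le> ?M - 1" by linarith
  qed
  obtain as' where as': "vmoves ?Z' as'" "length as' \<le> card ?Z' * card ?Z'" "nice (mvs ?Z' as')"
      "\<forall>x\<in>mvs ?Z' as'. x \<le> ?M - 1 + card ?Z'"
  proof -
    have "finite ?Z'" "0 \<notin> ?Z'" using Suc.prems by auto
    from Suc.hyps(1)[OF cZ' this bZ'] show ?thesis using that by blast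
  qed
  let ?m = "?M + Suc n"
  let ?tops = "map (\<lambda>j. ?M + j) [0..<Suc n]"
  have Zeq: "Z = insert ?M ?Z'" using MZ by auto
  have T: "vmoves Z ?tops" "mvs Z ?tops = insert ?m ?Z'"
    using top_moves[OF lt, of "Suc n"] Zeq by auto
  have fb: "\<forall>x\<in>mvs ?Z' as'. Suc x < ?m" using as'(4) cZ' M1 by auto
  have L: "vmoves (insert ?m ?Z') as'" "mvs (insert ?m ?Z') as' = insert ?m (mvs ?Z' as')"
    using mvs_lift[OF as'(1) fb] by auto
  show ?case
  proof (intro exI[of _ "?tops @ as'"] conjI)
    show "vmoves Z (?tops @ as')" using T L vmoves_append by metis
    have E: "mvs Z (?tops @ as') = insert ?m (mvs ?Z' as')" using T(2) L(2) mvs_append by metis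
    show "length (?tops @ as') \<le> card Z * card Z"
      using as'(2) cZ' Suc.hyps(2)[symmetric] by (simp add: le_trans)
    show "nice (mvs Z (?tops @ as'))" unfolding E nice_def
      using as'(3) fb unfolding nice_def by (auto; fastforce)
    show "\<forall>x\<in>mvs Z (?tops @ as'). x \<le> N + card Z" unfolding E
      using as'(4) MN cZ' Suc.hyps(2)[symmetric] M1 by auto
  qed
qed

lemma nice_gaps:
  assumes "finite Z" "nice Z"
  shows "all_gaps_pos Z"
  unfolding all_gaps_pos_def gaps_def ball_positions_def Let_def
proof (intro allI impI)
  fix i
  let ?p = "sorted_list_of_set Z"
  assume "i < length (map (\<lambda>i. ?p ! (i + 1) - ?p ! i - 1) [0..<length ?p - 1])"
  then have i: "i + 1 < length ?p" by auto
  have s: "sorted_wrt (<) ?p" by simp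
  have lt: "?p ! i < ?p ! (i + 1)" using sorted_wrt_nth_less[OF s, of i "i+1"] i by simp
  have "?p ! i \<in> Z" "?p ! (i + 1) \<in> Z" using i assms(1)
    by (metis Suc_lessD add.commute nth_mem plus_1_eq_Suc set_sorted_list_of_set)+
  then have "?p ! (i + 1) \<noteq> Suc (?p ! i)" using assms(2) unfolding nice_def by metis
  then show "1 \<le> map (\<lambda>i. ?p ! (i + 1) - ?p ! i - 1) [0..<length ?p - 1] ! i"
    using lt i by auto
qed



abbreviation "BB \<epsilon> \<equiv> measure_pmf (bernoulli_pmf (1 - \<epsilon>))"

lemma space_coin[simp]: "space (coin_space \<epsilon>) = UNIV"
  by (simp add: coin_space_def space_PiM)

lemma sets_BB[simp]: "sets (BB \<epsilon>) = UNIV" by simp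

lemma prob_coin: "prob_space (coin_space \<epsilon>)"
  unfolding coin_space_def by (intro prob_space_PiM measure_pmf.prob_space_axioms)

lemma coord_sets: "{\<omega>. \<omega> i = v} \<in> sets (coin_space \<epsilon>)"
proof -
  have "(\<lambda>\<omega>. \<omega> i) \<in> measurable (coin_space \<epsilon>) (BB \<epsilon>)"
    unfolding coin_space_def by (rule measurable_component_singleton) simp
  from measurable_sets[OF this, of "{v}"] show ?thesis by (simp add: vimage_def)
qed

lemma cyl_sets:
  assumes "finite J"
  shows "{\<omega>. \<forall>i\<in>J. \<omega> i = v i} \<in> sets (coin_space \<epsilon>)"
proof -
  have "{\<omega> \<in> space (coin_space \<epsilon>). \<forall>i\<in>J. \<omega> i = v i} \<in> sets (coin_space \<epsilon>)"
    by (rule sets.sets_Collect_finite_All) (use assms coord_sets in auto)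
  then show ?thesis by simp
qed

lemma fin_dep_meas:
  assumes J: "finite J" and dep: "\<And>\<omega> \<omega>'. (\<forall>i\<in>J. \<omega> i = \<omega>' i) \<Longrightarrow> F \<omega> = F \<omega>'"
    and rng: "\<And>\<omega>. F \<omega> \<in> A"
  shows "F \<in> measurable (coin_space \<epsilon>) (count_space A)"
proof -
  let ?h = "\<lambda>\<omega>. {i\<in>J. \<omega> i}"
  let ?G = "\<lambda>S. F (\<lambda>i. i \<in> S)"
  have h: "?h \<in> measurable (coin_space \<epsilon>) (count_space (Pow J))"
  proof (subst measurable_count_space_eq_countable)
    show "countable (Pow J)" using J by (simp add: countable_finite)
    show "?h \<in> space (coin_space \<epsilon>) \<rightarrow> Pow J \<and>
      (\<forall>a\<in>Pow J. ?h -` {a} \<inter> space (coin_space \<epsilon>) \<in> sets (coin_space \<epsilon>))"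
    proof (intro conjI ballI)
      show "?h \<in> space (coin_space \<epsilon>) \<rightarrow> Pow J" by auto
      fix S assume "S \<in> Pow J"
      then have "?h -` {S} \<inter> space (coin_space \<epsilon>) = {\<omega>. \<forall>i\<in>J. \<omega> i = (i \<in> S)}" by auto
      then show "?h -` {S} \<inter> space (coin_space \<epsilon>) \<in> sets (coin_space \<epsilon>)"
        using cyl_sets[OF J] by simp
    qed
  qed
  have G: "?G \<in> measurable (count_space (Pow J)) (count_space A)" using rng by simp
  have "(\<lambda>\<omega>. ?G (?h \<omega>)) \<in> measurable (coin_space \<epsilon>) (count_space A)"
    using measurable_compose[OF h G] by (simp add: comp_def)
  moreover have "\<And>\<omega>. ?G (?h \<omega>) = F \<omega>" by (rule dep) auto
  ultimately show ?thesis by simp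
qed

definition Fin :: "nat \<Rightarrow> nat set set" where
  "Fin d = {Z. finite Z \<and> 0 \<notin> Z \<and> card Z = d}"

lemma countable_Fin: "countable (Fin d)"
  by (rule countable_subset[OF _ countable_Collect_finite]) (auto simp: Fin_def)

lemma traj_Fin:
  assumes "finite \<zeta>0" "0 \<notin> \<zeta>0"
  shows "sbbs_traj c \<zeta>0 \<omega> t \<in> Fin (card \<zeta>0)"
  by (induction t) (use assms step_conserve in \<open>auto simp: Fin_def\<close>)

lemma traj_meas:
  assumes "finite \<zeta>0" "0 \<notin> \<zeta>0"
  shows "(\<lambda>\<omega>. sbbs_traj c \<zeta>0 \<omega> t) \<in> measurable (coin_space \<epsilon>) (count_space (Fin (card \<zeta>0)))"
proof (induction t)
  case 0
  then show ?case using assms by (simp add: Fin_def)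
next
  case (Suc t)
  have f: "(\<lambda>\<omega>. sbbs_step c Z (\<lambda>k. \<omega> (t, k))) \<in> measurable (coin_space \<epsilon>) (count_space (Fin (card \<zeta>0)))"
    if Z: "Z \<in> Fin (card \<zeta>0)" for Z
  proof (rule fin_dep_meas[where J = "(\<lambda>k. (t, k)) ` Z"])
    show "finite ((\<lambda>k. (t, k)) ` Z)" using Z by (simp add: Fin_def)
    show "sbbs_step c Z (\<lambda>k. \<omega> (t, k)) = sbbs_step c Z (\<lambda>k. \<omega>' (t, k))"
      if "\<forall>i\<in>(\<lambda>k. (t, k)) ` Z. \<omega> i = \<omega>' i" for \<omega> \<omega>'
      using that by (intro sbbs_step_cong) auto
    show "sbbs_step c Z (\<lambda>k. \<omega> (t, k)) \<in> Fin (card \<zeta>0)" for \<omega>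
      using Z step_conserve[of Z c] by (auto simp: Fin_def)
  qed
  have "(\<lambda>\<omega>. sbbs_step c (sbbs_traj c \<zeta>0 \<omega> t) (\<lambda>k. \<omega> (t, k))) \<in> measurable (coin_space \<epsilon>) (count_space (Fin (card \<zeta>0)))"
    by (rule measurable_compose_countable'[OF f Suc countable_Fin])
  then show ?case by simp
qed

lemma traj_dep:
  assumes "\<forall>s<t. \<forall>k. \<omega> (s, k) = \<omega>' (s, k)"
  shows "sbbs_traj c \<zeta>0 \<omega> t = sbbs_traj c \<zeta>0 \<omega>' t"
  using assms by (induction t) auto

lemma traj_event:
  assumes "finite \<zeta>0" "0 \<notin> \<zeta>0"
  shows "{\<omega>. P (sbbs_traj c \<zeta>0 \<omega> t)} \<in> sets (coin_space \<epsilon>)"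
proof -
  have "(\<lambda>\<omega>. sbbs_traj c \<zeta>0 \<omega> t) -` {Z\<in>Fin (card \<zeta>0). P Z} \<inter> space (coin_space \<epsilon>) \<in> sets (coin_space \<epsilon>)"
    by (rule measurable_sets[OF traj_meas[OF assms]]) auto
  moreover have "(\<lambda>\<omega>. sbbs_traj c \<zeta>0 \<omega> t) -` {Z\<in>Fin (card \<zeta>0). P Z} \<inter> space (coin_space \<epsilon>)
      = {\<omega>. P (sbbs_traj c \<zeta>0 \<omega> t)}"
    using traj_Fin[OF assms] by auto
  ultimately show ?thesis by simp
qed



lemma indep_coords:
  "prob_space.indep_vars (coin_space \<epsilon>) (\<lambda>_. BB \<epsilon>) (\<lambda>i \<omega>. \<omega> i) UNIV"
proof -
  interpret P: prob_space "coin_space \<epsilon>" by (rule prob_coin)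
  interpret PP: product_prob_space "\<lambda>_::nat\<times>nat. BB \<epsilon>" "UNIV :: (nat \<times> nat) set"
    by (intro product_prob_spaceI measure_pmf.prob_space_axioms)
  have rv: "(\<lambda>\<omega>. \<omega> i) \<in> measurable (coin_space \<epsilon>) (BB \<epsilon>)" for i :: "nat \<times> nat"
    unfolding coin_space_def by (rule measurable_component_singleton) simp
  have d: "\<And>i. distr (coin_space \<epsilon>) (BB \<epsilon>) (\<lambda>\<omega>. \<omega> i) = BB \<epsilon>"
    unfolding coin_space_def by (rule PP.PiM_component) simp
  have iff: "P.indep_vars (\<lambda>_. BB \<epsilon>) (\<lambda>i \<omega>. \<omega> i) UNIV \<longleftrightarrow>
     distr (coin_space \<epsilon>) (PiM UNIV (\<lambda>i. BB \<epsilon>)) (\<lambda>x. \<lambda>i\<in>UNIV. x i) =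
     PiM UNIV (\<lambda>i. distr (coin_space \<epsilon>) (BB \<epsilon>) (\<lambda>\<omega>. \<omega> i))"
    by (rule P.indep_vars_iff_distr_eq_PiM[OF _ rv]) simp
  have 1: "(\<lambda>x. \<lambda>i\<in>UNIV. x i) = (\<lambda>x::nat\<times>nat\<Rightarrow>bool. x)" by (auto simp: restrict_def)
  have 2: "PiM UNIV (\<lambda>i. distr (coin_space \<epsilon>) (BB \<epsilon>) (\<lambda>\<omega>. \<omega> i)) = PiM UNIV (\<lambda>i::nat\<times>nat. BB \<epsilon>)"
    by (rule PiM_cong) (simp_all add: d)
  have "distr (coin_space \<epsilon>) (PiM UNIV (\<lambda>i. BB \<epsilon>)) (\<lambda>x. \<lambda>i\<in>UNIV. x i) =
     PiM UNIV (\<lambda>i. distr (coin_space \<epsilon>) (BB \<epsilon>) (\<lambda>\<omega>. \<omega> i))"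
    unfolding 1 2 unfolding coin_space_def by (rule distr_id)
  then show ?thesis using iff by simp
qed

definition extJ :: "('i set) \<Rightarrow> ('i \<Rightarrow> bool) \<Rightarrow> ('i \<Rightarrow> bool)" where
  "extJ K x = (\<lambda>i. if i \<in> K then x i else False)"

lemma ext_meas: "extJ K \<in> measurable (PiM K (\<lambda>_. BB \<epsilon>)) (coin_space \<epsilon>)"
  unfolding coin_space_def extJ_def
proof (rule measurable_PiM_single')
  fix i :: "nat \<times> nat"
  show "(\<lambda>\<omega>. if i \<in> K then \<omega> i else False) \<in> measurable (PiM K (\<lambda>_. BB \<epsilon>)) (BB \<epsilon>)"
    by (cases "i \<in> K") (auto intro: measurable_component_singleton)
qed (auto simp: space_PiM)

lemma indep_split:
  assumes S1: "S1 \<in> sets (coin_space \<epsilon>)" and S2: "S2 \<in> sets (coin_space \<epsilon>)"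
    and disj: "J1 \<inter> J2 = {}"
    and d1: "\<And>\<omega> \<omega>'. \<forall>i\<in>J1. \<omega> i = \<omega>' i \<Longrightarrow> \<omega> \<in> S1 \<Longrightarrow> \<omega>' \<in> S1"
    and d2: "\<And>\<omega> \<omega>'. \<forall>i\<in>J2. \<omega> i = \<omega>' i \<Longrightarrow> \<omega> \<in> S2 \<Longrightarrow> \<omega>' \<in> S2"
  shows "measure (coin_space \<epsilon>) (S1 \<inter> S2) = measure (coin_space \<epsilon>) S1 * measure (coin_space \<epsilon>) S2"
proof -
  interpret P: prob_space "coin_space \<epsilon>" by (rule prob_coin)
  let ?K = "\<lambda>b. if b then J1 else J2"
  let ?S = "\<lambda>b. if b then S1 else S2"
  have ind: "P.indep_vars (\<lambda>b. PiM (?K b) (\<lambda>_. BB \<epsilon>)) (\<lambda>b \<omega>. restrict (\<lambda>i. \<omega> i) (?K b)) UNIV"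
  proof (rule P.indep_vars_restrict[OF indep_coords])
    show "disjoint_family_on ?K UNIV" unfolding disjoint_family_on_def
    proof (intro ballI impI)
      fix m n :: bool assume "m \<noteq> n" then show "?K m \<inter> ?K n = {}" using disj by (cases m; cases n) auto
    qed
  qed auto
  let ?A = "\<lambda>b. extJ (?K b) -` ?S b \<inter> space (PiM (?K b) (\<lambda>_. BB \<epsilon>))"
  have As: "?A b \<in> sets (PiM (?K b) (\<lambda>_. BB \<epsilon>))" for b
    using measurable_sets[OF ext_meas[of "?K b" \<epsilon>], of "?S b"] S1 S2 by (cases b) auto
  have pre: "(\<lambda>\<omega>. restrict (\<lambda>i. \<omega> i) (?K b)) -` ?A b \<inter> space (coin_space \<epsilon>) = ?S b" for b
  proof -
    have "extJ (?K b) (restrict \<omega> (?K b)) \<in> ?S b \<longleftrightarrow> \<omega> \<in> ?S b" for \<omega>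
    proof -
      have agree: "\<forall>i\<in>?K b. extJ (?K b) (restrict \<omega> (?K b)) i = \<omega> i" by (simp add: extJ_def)
      show ?thesis
        using d1[of "extJ (?K b) (restrict \<omega> (?K b))" \<omega>] d1[of \<omega> "extJ (?K b) (restrict \<omega> (?K b))"]
          d2[of "extJ (?K b) (restrict \<omega> (?K b))" \<omega>] d2[of \<omega> "extJ (?K b) (restrict \<omega> (?K b))"] agree
        by (cases b) auto
    qed
    then show ?thesis by (auto simp: space_PiM)
  qed
  have "P.prob (\<Inter>b\<in>UNIV. (\<lambda>\<omega>. restrict (\<lambda>i. \<omega> i) (?K b)) -` ?A b \<inter> space (coin_space \<epsilon>))
      = (\<Prod>b\<in>UNIV. P.prob ((\<lambda>\<omega>. restrict (\<lambda>i. \<omega> i) (?K b)) -` ?A b \<inter> space (coin_space \<epsilon>)))"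
    by (rule P.indep_varsD[OF ind]) (use As in auto)
  then have "P.prob (\<Inter>b\<in>UNIV. ?S b) = (\<Prod>b\<in>UNIV. P.prob (?S b))" by (simp only: pre)
  moreover have "(\<Inter>b\<in>UNIV. ?S b) = S1 \<inter> S2" by (auto simp: UNIV_bool)
  moreover have "(\<Prod>b\<in>UNIV. P.prob (?S b)) = P.prob S1 * P.prob S2" by (simp add: UNIV_bool)
  ultimately show ?thesis by simp
qed

lemma cyl_prob:
  assumes J: "finite J" and e: "0 < \<epsilon>" "\<epsilon> < 1"
  shows "measure (coin_space \<epsilon>) {\<omega>. \<forall>i\<in>J. \<omega> i = v i} \<ge> (min \<epsilon> (1 - \<epsilon>)) ^ card J"
proof -
  interpret PP: product_prob_space "\<lambda>_::nat\<times>nat. BB \<epsilon>" "UNIV :: (nat \<times> nat) set"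
    by (intro product_prob_spaceI measure_pmf.prob_space_axioms)
  have "emeasure (coin_space \<epsilon>) {\<omega>. \<forall>i\<in>J. \<omega> i = v i}
      = emeasure (coin_space \<epsilon>) {x\<in>space (coin_space \<epsilon>). \<forall>i\<in>J. x i \<in> {v i}}" by simp
  also have "\<dots> = (\<Prod>i\<in>J. emeasure (BB \<epsilon>) {v i})"
    unfolding coin_space_def using PP.emeasure_PiM_Collect[of J "\<lambda>i. {v i}"] J by simp
  also have "\<dots> = (\<Prod>i\<in>J. ennreal (if v i then 1 - \<epsilon> else \<epsilon>))"
    using e by (intro prod.cong refl) (auto simp: emeasure_pmf_single)
  also have "\<dots> = ennreal (\<Prod>i\<in>J. (if v i then 1 - \<epsilon> else \<epsilon>))"
    using e by (subst prod_ennreal) auto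
  finally have eq: "measure (coin_space \<epsilon>) {\<omega>. \<forall>i\<in>J. \<omega> i = v i} = (\<Prod>i\<in>J. (if v i then 1 - \<epsilon> else \<epsilon>))"
    using e by (simp add: measure_def prod_nonneg)
  have "(min \<epsilon> (1 - \<epsilon>)) ^ card J = (\<Prod>i\<in>J. min \<epsilon> (1 - \<epsilon>))" by simp
  also have "\<dots> \<le> (\<Prod>i\<in>J. (if v i then 1 - \<epsilon> else \<epsilon>))"
    using e by (intro prod_mono) auto
  finally show ?thesis using eq by simp
qed



definition mpath :: "nat set \<Rightarrow> nat list" where
  "mpath Z = (SOME as. vmoves Z as \<and> length as \<le> card Z * card Z \<and> nice (mvs Z as))"

lemma path_ok:
  assumes "finite Z" "0 \<notin> Z"
  shows "vmoves Z (mpath Z) \<and> length (mpath Z) \<le> card Z * card Z \<and> nice (mvs Z (mpath Z))"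
proof -
  obtain N where "\<forall>y\<in>Z. y \<le> N" using assms(1) finite_nat_set_iff_bounded_le by blast
  then have "\<exists>as. vmoves Z as \<and> length as \<le> card Z * card Z \<and> nice (mvs Z as)"
    using exist_moves[OF assms] by blast
  then show ?thesis unfolding mpath_def by (rule someI_ex)
qed

lemma traj_follow:
  assumes c: "c \<ge> 1" and v: "vmoves Z as" and Z: "finite Z" "0 \<notin> Z"
    and t0: "sbbs_traj c \<zeta>0 \<omega> t0 = Z"
    and coins: "\<forall>s<length as. \<forall>k\<in>mvs Z (take s as). \<omega> (t0 + s, k) = (k = as ! s)"
  shows "s \<le> length as \<Longrightarrow> sbbs_traj c \<zeta>0 \<omega> (t0 + s) = mvs Z (take s as)"
proof (induction s)
  case 0 then show ?case using t0 by simp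
next
  case (Suc s)
  let ?W = "mvs Z (take s as)"
  have s: "s < length as" using Suc.prems by simp
  have IH: "sbbs_traj c \<zeta>0 \<omega> (t0 + s) = ?W" using Suc.IH s by simp
  have as_eq: "as = take s as @ (as ! s) # drop (Suc s) as" using s by (simp add: id_take_nth_drop)
  have "vmoves Z (take s as @ (as ! s) # drop (Suc s) as)" using v as_eq by simp
  then have vt: "vmoves Z (take s as)" and vW: "vmoves ?W ((as ! s) # drop (Suc s) as)"
    unfolding vmoves_append by auto
  then have a: "as ! s \<in> ?W" "Suc (as ! s) \<notin> ?W" by auto
  have W0: "0 \<notin> ?W" using mvs_props[OF vt Z] by simp
  have "sbbs_step c ?W (\<lambda>k. \<omega> (t0 + s, k)) = mv ?W (as ! s)"
    by (rule step_move[OF a c _ W0]) (use coins s in auto)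
  moreover have "mvs Z (take (Suc s) as) = mv ?W (as ! s)"
    using s by (simp add: take_Suc_conv_app_nth mvs_append)
  ultimately show ?case using IH by simp
qed

definition cylJ :: "nat \<Rightarrow> nat set \<Rightarrow> (nat \<times> nat) set" where
  "cylJ t0 Z = (\<Union>s\<in>{..<length (mpath Z)}. (\<lambda>k. (t0 + s, k)) ` mvs Z (take s (mpath Z)))"

definition cylv :: "nat \<Rightarrow> nat set \<Rightarrow> nat \<times> nat \<Rightarrow> bool" where
  "cylv t0 Z i = (snd i = mpath Z ! (fst i - t0))"

definition cyl :: "nat \<Rightarrow> nat set \<Rightarrow> (nat \<times> nat \<Rightarrow> bool) set" where
  "cyl t0 Z = {\<omega>. \<forall>i\<in>cylJ t0 Z. \<omega> i = cylv t0 Z i}"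

lemma cyl_iff:
  "\<omega> \<in> cyl t0 Z \<longleftrightarrow> (\<forall>s<length (mpath Z). \<forall>k\<in>mvs Z (take s (mpath Z)). \<omega> (t0 + s, k) = (k = mpath Z ! s))"
  unfolding cyl_def cylJ_def cylv_def by auto

lemma cylJ_card:
  assumes "finite Z" "0 \<notin> Z"
  shows "finite (cylJ t0 Z) \<and> card (cylJ t0 Z) \<le> card Z * card Z * card Z"
proof -
  let ?as = "mpath Z"
  have P: "vmoves Z ?as" "length ?as \<le> card Z * card Z" using path_ok[OF assms] by auto
  have m: "s < length ?as \<Longrightarrow> finite (mvs Z (take s ?as)) \<and> card (mvs Z (take s ?as)) = card Z" for s
  proof -
    assume "s < length ?as"
    have "vmoves Z (take s ?as)"
      using P(1) vmoves_append[of Z "take s ?as" "drop s ?as"] by simp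
    then show ?thesis using mvs_props assms by blast
  qed
  have fin: "finite (cylJ t0 Z)" unfolding cylJ_def using m by auto
  have "card (cylJ t0 Z) \<le> (\<Sum>s\<in>{..<length ?as}. card ((\<lambda>k. (t0 + s, k)) ` mvs Z (take s ?as)))"
    unfolding cylJ_def by (rule card_UN_le) simp
  also have "\<dots> \<le> (\<Sum>s\<in>{..<length ?as}. card Z)"
    by (rule sum_mono) (use m card_image_le in fastforce)
  also have "\<dots> = length ?as * card Z" by simp
  also have "\<dots> \<le> card Z * card Z * card Z" using P(2) by simp
  finally show ?thesis using fin by simp
qed

lemma cyl_good:
  assumes c: "c \<ge> 1" and Z: "finite Z" "0 \<notin> Z"
    and t0: "sbbs_traj c \<zeta>0 \<omega> t0 = Z" and w: "\<omega> \<in> cyl t0 Z"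
  shows "all_gaps_pos (sbbs_traj c \<zeta>0 \<omega> (t0 + length (mpath Z)))"
proof -
  have P: "vmoves Z (mpath Z)" "nice (mvs Z (mpath Z))" using path_ok[OF Z] by auto
  have "sbbs_traj c \<zeta>0 \<omega> (t0 + length (mpath Z)) = mvs Z (mpath Z)"
    using traj_follow[OF c P(1) Z t0, of "length (mpath Z)"] w unfolding cyl_iff by simp
  then show ?thesis using nice_gaps P mvs_props[OF P(1) Z] by simp
qed



definition EE :: "enat \<Rightarrow> nat set \<Rightarrow> nat \<Rightarrow> nat \<Rightarrow> (nat \<times> nat \<Rightarrow> bool) set" where
  "EE c \<zeta>0 T n = {\<omega>. \<forall>t\<le>n*T. \<not> all_gaps_pos (sbbs_traj c \<zeta>0 \<omega> t)}"

lemma EE_sets: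
  assumes "finite \<zeta>0" "0 \<notin> \<zeta>0"
  shows "EE c \<zeta>0 T n \<in> sets (coin_space \<epsilon>)"
proof -
  have "{\<omega>\<in>space (coin_space \<epsilon>). \<forall>t\<in>{..n*T}. \<not> all_gaps_pos (sbbs_traj c \<zeta>0 \<omega> t)} \<in> sets (coin_space \<epsilon>)"
    by (rule sets.sets_Collect_finite_All) (use traj_event[OF assms] in auto)
  moreover have "{\<omega>\<in>space (coin_space \<epsilon>). \<forall>t\<in>{..n*T}. \<not> all_gaps_pos (sbbs_traj c \<zeta>0 \<omega> t)} = EE c \<zeta>0 T n"
    unfolding EE_def by auto
  ultimately show ?thesis by simp
qed

lemma rec_step:
  assumes c: "c \<ge> 1" and z: "finite \<zeta>0" "0 \<notin> \<zeta>0" and e: "0 < \<epsilon>" "\<epsilon> < 1"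
    and T: "T = card \<zeta>0 * card \<zeta>0"
  defines "p \<equiv> (min \<epsilon> (1 - \<epsilon>)) ^ (T * card \<zeta>0)"
  shows "emeasure (coin_space \<epsilon>) (EE c \<zeta>0 T (Suc n)) \<le> ennreal (1 - p) * emeasure (coin_space \<epsilon>) (EE c \<zeta>0 T n)"
proof -
  interpret P: prob_space "coin_space \<epsilon>" by (rule prob_coin)
  let ?d = "card \<zeta>0"
  let ?F = "Fin ?d"
  let ?t0 = "n * T"
  let ?A = "\<lambda>Z. EE c \<zeta>0 T n \<inter> {\<omega>. sbbs_traj c \<zeta>0 \<omega> ?t0 = Z}"
  let ?C = "\<lambda>Z. cyl ?t0 Z"
  have Esets: "EE c \<zeta>0 T m \<in> sets (coin_space \<epsilon>)" for m by (rule EE_sets[OF z])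
  have Asets: "?A Z \<in> sets (coin_space \<epsilon>)" for Z
    by (rule sets.Int[OF Esets traj_event[OF z]])
  have Csets: "?C Z \<in> sets (coin_space \<epsilon>)" if "Z \<in> ?F" for Z
    unfolding cyl_def using cyl_sets cylJ_card that by (auto simp: Fin_def)
  have p01: "0 \<le> p" "p \<le> 1" unfolding p_def using e by (auto intro: power_le_one)
  have sub: "EE c \<zeta>0 T (Suc n) \<subseteq> (\<Union>Z\<in>?F. ?A Z - ?C Z)"
  proof
    fix \<omega> assume w: "\<omega> \<in> EE c \<zeta>0 T (Suc n)"
    let ?Z = "sbbs_traj c \<zeta>0 \<omega> ?t0"
    have ZF: "?Z \<in> ?F" using traj_Fin[OF z] .
    then have Zp: "finite ?Z" "0 \<notin> ?Z" "card ?Z = ?d" by (auto simp: Fin_def)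
    have "\<omega> \<in> EE c \<zeta>0 T n" using w unfolding EE_def by auto
    moreover have "\<omega> \<notin> ?C ?Z"
    proof
      assume "\<omega> \<in> ?C ?Z"
      then have g: "all_gaps_pos (sbbs_traj c \<zeta>0 \<omega> (?t0 + length (mpath ?Z)))"
        using cyl_good[OF c Zp(1,2) refl] by blast
      have "length (mpath ?Z) \<le> T" using path_ok[OF Zp(1,2)] Zp(3) T by simp
      then have "?t0 + length (mpath ?Z) \<le> Suc n * T" by simp
      then show False using w g unfolding EE_def by blast
    qed
    ultimately show "\<omega> \<in> (\<Union>Z\<in>?F. ?A Z - ?C Z)" using ZF by blast
  qed
  have per: "emeasure (coin_space \<epsilon>) (?A Z - ?C Z) \<le> ennreal (1 - p) * emeasure (coin_space \<epsilon>) (?A Z)"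
    if ZF: "Z \<in> ?F" for Z
  proof -
    have Zp: "finite Z" "0 \<notin> Z" "card Z = ?d" using ZF by (auto simp: Fin_def)
    have dA: "\<omega>' \<in> ?A Z" if a: "\<forall>i\<in>{i. fst i < ?t0}. \<omega> i = \<omega>' i" and b: "\<omega> \<in> ?A Z" for \<omega> \<omega>'
    proof -
      have "sbbs_traj c \<zeta>0 \<omega> t = sbbs_traj c \<zeta>0 \<omega>' t" if "t \<le> ?t0" for t
        by (rule traj_dep) (use a that in auto)
      then show ?thesis using b unfolding EE_def by auto
    qed
    have sJ: "cylJ ?t0 Z \<subseteq> {i. fst i \<ge> ?t0}" unfolding cylJ_def by auto
    have dC: "\<omega>' \<in> ?C Z" if a: "\<forall>i\<in>{i. fst i \<ge> ?t0}. \<omega> i = \<omega>' i" and b: "\<omega> \<in> ?C Z" for \<omega> \<omega>'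
    proof -
      have "\<forall>i\<in>cylJ ?t0 Z. \<omega>' i = \<omega> i" using a sJ by auto
      then show ?thesis using b unfolding cyl_def by auto
    qed
    have dj: "{i::nat\<times>nat. fst i < ?t0} \<inter> {i. fst i \<ge> ?t0} = {}" by auto
    have ind: "P.prob (?A Z \<inter> ?C Z) = P.prob (?A Z) * P.prob (?C Z)"
      by (rule indep_split[OF Asets Csets[OF ZF] dj dA dC])
    have pc: "P.prob (?C Z) \<ge> p"
    proof -
      let ?q = "min \<epsilon> (1 - \<epsilon>)"
      have cJ: "finite (cylJ ?t0 Z)" "card (cylJ ?t0 Z) \<le> T * ?d"
        using cylJ_card[OF Zp(1,2)] Zp(3) T by auto
      have "P.prob (?C Z) \<ge> ?q ^ card (cylJ ?t0 Z)"
        unfolding cyl_def by (rule cyl_prob[OF cJ(1) e])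
      moreover have "?q ^ (T * ?d) \<le> ?q ^ card (cylJ ?t0 Z)"
        by (rule power_decreasing[OF cJ(2)]) (use e in auto)
      ultimately show ?thesis unfolding p_def by linarith
    qed
    have "P.prob (?A Z - ?C Z) = P.prob (?A Z) - P.prob (?A Z \<inter> ?C Z)"
      by (rule P.finite_measure_Diff'[OF Asets Csets[OF ZF]])
    also have "\<dots> = P.prob (?A Z) * (1 - P.prob (?C Z))" using ind by (simp add: algebra_simps)
    also have "\<dots> \<le> P.prob (?A Z) * (1 - p)"
      using pc by (intro mult_left_mono) auto
    finally have r: "P.prob (?A Z - ?C Z) \<le> (1 - p) * P.prob (?A Z)" by (simp add: mult.commute)
    have "emeasure (coin_space \<epsilon>) (?A Z - ?C Z) = ennreal (P.prob (?A Z - ?C Z))"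
      by (rule P.emeasure_eq_measure)
    also have "\<dots> \<le> ennreal ((1 - p) * P.prob (?A Z))" using r by (rule ennreal_leI)
    also have "\<dots> = ennreal (1 - p) * emeasure (coin_space \<epsilon>) (?A Z)"
      using p01 by (simp add: ennreal_mult P.emeasure_eq_measure)
    finally show ?thesis .
  qed
  have disjA: "disjoint_family_on (\<lambda>Z. ?A Z - ?C Z) ?F" "disjoint_family_on ?A ?F"
    unfolding disjoint_family_on_def by auto
  have "emeasure (coin_space \<epsilon>) (EE c \<zeta>0 T (Suc n)) \<le> emeasure (coin_space \<epsilon>) (\<Union>Z\<in>?F. ?A Z - ?C Z)"
    by (rule emeasure_mono[OF sub]) (use Asets Csets countable_Fin in \<open>auto intro!: sets.countable_UN''\<close>)
  also have "\<dots> = (\<integral>\<^sup>+Z. emeasure (coin_space \<epsilon>) (?A Z - ?C Z) \<partial>count_space ?F)"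
    by (rule emeasure_UN_countable[OF _ countable_Fin disjA(1)]) (use Asets Csets in auto)
  also have "\<dots> \<le> (\<integral>\<^sup>+Z. ennreal (1 - p) * emeasure (coin_space \<epsilon>) (?A Z) \<partial>count_space ?F)"
    by (rule nn_integral_mono) (use per in auto)
  also have "\<dots> = ennreal (1 - p) * (\<integral>\<^sup>+Z. emeasure (coin_space \<epsilon>) (?A Z) \<partial>count_space ?F)"
    by (rule nn_integral_cmult) simp
  also have "(\<integral>\<^sup>+Z. emeasure (coin_space \<epsilon>) (?A Z) \<partial>count_space ?F) = emeasure (coin_space \<epsilon>) (\<Union>Z\<in>?F. ?A Z)"
    by (rule emeasure_UN_countable[OF _ countable_Fin disjA(2), symmetric]) (use Asets in auto)
  also have "emeasure (coin_space \<epsilon>) (\<Union>Z\<in>?F. ?A Z) \<le> emeasure (coin_space \<epsilon>) (EE c \<zeta>0 T n)"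
    by (rule emeasure_mono) (use Esets in auto)
  finally show ?thesis by (simp add: mult_left_mono)
qed



lemma sum_le_suminf_ennreal: "(\<Sum>i<N. f i) \<le> (\<Sum>i. f i :: ennreal)"
  unfolding suminf_eq_SUP by (rule SUP_upper) simp

lemma suminf_one_top: "(\<Sum>i::nat. 1 :: ennreal) = top"
proof -
  have "(\<Sum>i::nat. 1 :: ennreal) = (SUP n. of_nat n)" unfolding suminf_eq_SUP by simp
  then show ?thesis by (simp add: ennreal_SUP_of_nat_eq_top)
qed

lemma div_facts:
  fixes m T :: nat
  assumes "T > 0"
  shows "m \<le> T * ((m + T - 1) div T)" "n < (m + T - 1) div T \<Longrightarrow> n * T < m"
proof -
  let ?q = "(m + T - 1) div T"
  have e: "T * ?q + (m + T - 1) mod T = m + T - 1" by simp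
  have r: "(m + T - 1) mod T < T" using assms by simp
  show "m \<le> T * ?q" using e r assms by linarith
  assume "n < ?q"
  then have "Suc n \<le> ?q" by simp
  then have "T * Suc n \<le> T * ?q" by (rule mult_le_mono2)
  moreover have "T * ?q \<le> m + T - 1" using e by linarith
  moreover have "T * Suc n = T * n + T" by simp
  ultimately have "T * n + T \<le> m + T - 1" by linarith
  then show "n * T < m" using assms by (simp add: mult.commute)
qed

lemma gamma_bound:
  assumes T: "T > 0"
  shows "gamma_time c \<zeta>0 \<omega> \<le> of_nat T * (\<Sum>n. indicator (EE c \<zeta>0 T n) \<omega>)"
proof (cases "\<exists>t. all_gaps_pos (sbbs_traj c \<zeta>0 \<omega> t)")
  case True
  let ?m = "LEAST t. all_gaps_pos (sbbs_traj c \<zeta>0 \<omega> t)"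
  let ?N = "(?m + T - 1) div T"
  have g: "gamma_time c \<zeta>0 \<omega> = of_nat ?m" using True unfolding gamma_time_def by simp
  have inE: "\<omega> \<in> EE c \<zeta>0 T n" if "n < ?N" for n
  proof -
    have "n * T < ?m" using div_facts(2)[OF T that] .
    have "\<forall>t\<le>n*T. \<not> all_gaps_pos (sbbs_traj c \<zeta>0 \<omega> t)"
    proof (intro allI impI)
      fix t assume "t \<le> n * T"
      then have "t < ?m" using \<open>n * T < ?m\<close> by linarith
      then show "\<not> all_gaps_pos (sbbs_traj c \<zeta>0 \<omega> t)" by (rule not_less_Least)
    qed
    then show ?thesis unfolding EE_def by simp
  qed
  have "(\<Sum>n<?N. indicator (EE c \<zeta>0 T n) \<omega> :: ennreal) = (\<Sum>n<?N. 1)"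
    by (rule sum.cong) (auto simp: inE)
  then have sN: "(\<Sum>n<?N. indicator (EE c \<zeta>0 T n) \<omega> :: ennreal) = of_nat ?N" by simp
  have "of_nat ?m \<le> (of_nat (T * ?N) :: ennreal)" using div_facts(1)[OF T, of ?m] by (simp only: of_nat_le_iff)
  also have "\<dots> = of_nat T * of_nat ?N" by simp
  also have "\<dots> \<le> of_nat T * (\<Sum>n. indicator (EE c \<zeta>0 T n) \<omega>)"
    by (rule mult_left_mono) (use sum_le_suminf_ennreal[of "\<lambda>n. indicator (EE c \<zeta>0 T n) \<omega>" ?N] sN in auto)
  finally show ?thesis using g by simp
next
  case False
  then have "\<omega> \<in> EE c \<zeta>0 T n" for n unfolding EE_def by auto
  then have "(\<Sum>n. indicator (EE c \<zeta>0 T n) \<omega> :: ennreal) = top" by (simp add: suminf_one_top)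
  then show ?thesis using T False unfolding gamma_time_def by (simp add: ennreal_mult_top)
qed

theorem lemma5p1:
  fixes d :: nat and \<epsilon> :: real and c :: enat and x :: "nat list" and \<zeta>0 :: "nat set"
  assumes "d \<ge> 2" and "0 < \<epsilon>" and "\<epsilon> < 1" and "c \<ge> 1"
    and "length x = d - 1"
    and "finite \<zeta>0" and "0 \<notin> \<zeta>0" and "card \<zeta>0 = d"
    and "gaps \<zeta>0 = x"
  shows "(\<integral>\<^sup>+ \<omega>. gamma_time c \<zeta>0 \<omega> \<partial>coin_space \<epsilon>) < \<infinity>"
proof -
  interpret P: prob_space "coin_space \<epsilon>" by (rule prob_coin)
  define T where "T = card \<zeta>0 * card \<zeta>0"
  define p where "p = (min \<epsilon> (1 - \<epsilon>)) ^ (T * card \<zeta>0)"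
  have T0: "T > 0" unfolding T_def using assms(1,8) by simp
  have p0: "0 < p" "p \<le> 1" unfolding p_def using assms(2,3) by (auto intro: power_le_one)
  let ?E = "EE c \<zeta>0 T"
  have Es: "?E n \<in> sets (coin_space \<epsilon>)" for n by (rule EE_sets[OF assms(6,7)])
  have bnd: "emeasure (coin_space \<epsilon>) (?E n) \<le> ennreal ((1 - p) ^ n)" for n
  proof (induction n)
    case 0
    have "emeasure (coin_space \<epsilon>) (?E 0) \<le> 1" by (rule P.emeasure_le_1)
    then show ?case by simp
  next
    case (Suc n)
    have "emeasure (coin_space \<epsilon>) (?E (Suc n)) \<le> ennreal (1 - p) * emeasure (coin_space \<epsilon>) (?E n)"
      unfolding p_def by (rule rec_step[OF assms(4,6,7,2,3) T_def])
    also have "\<dots> \<le> ennreal (1 - p) * ennreal ((1 - p) ^ n)"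
      by (rule mult_left_mono[OF Suc]) simp
    also have "\<dots> = ennreal ((1 - p) ^ Suc n)"
      using p0 by (simp add: ennreal_mult[symmetric])
    finally show ?case .
  qed
  have "(\<integral>\<^sup>+ \<omega>. gamma_time c \<zeta>0 \<omega> \<partial>coin_space \<epsilon>) \<le>
        (\<integral>\<^sup>+ \<omega>. of_nat T * (\<Sum>n. indicator (?E n) \<omega>) \<partial>coin_space \<epsilon>)"
    by (rule nn_integral_mono) (rule gamma_bound[OF T0])
  also have "\<dots> = of_nat T * (\<integral>\<^sup>+ \<omega>. (\<Sum>n. indicator (?E n) \<omega>) \<partial>coin_space \<epsilon>)"
    by (rule nn_integral_cmult) (use Es in auto)
  also have "(\<integral>\<^sup>+ \<omega>. (\<Sum>n. indicator (?E n) \<omega>) \<partial>coin_space \<epsilon>) = (\<Sum>n. emeasure (coin_space \<epsilon>) (?E n))"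
    by (subst nn_integral_suminf) (use Es in auto)
  also have "(\<Sum>n. emeasure (coin_space \<epsilon>) (?E n)) \<le> (\<Sum>n. ennreal ((1 - p) ^ n))"
    by (rule suminf_le) (use bnd in auto)
  also have "(\<Sum>n. ennreal ((1 - p) ^ n)) = ennreal (\<Sum>n. (1 - p) ^ n)"
    by (rule suminf_ennreal2) (use p0 in \<open>auto intro: summable_geometric\<close>)
  also have "(\<Sum>n. (1 - p) ^ n) = 1 / p"
    using p0 by (subst suminf_geometric) auto
  finally have "(\<integral>\<^sup>+ \<omega>. gamma_time c \<zeta>0 \<omega> \<partial>coin_space \<epsilon>) \<le> of_nat T * ennreal (1 / p)"
    by (simp add: mult_left_mono)
  also have "\<dots> < \<infinity>" by (simp add: ennreal_mult_less_top of_nat_less_top)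
  finally show ?thesis .
qed

end
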